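(* Let $\mathbb K$ be a field with $2\in\mathbb K^\times$, $A$ a unital commutative associative $\mathbb K$-algebra with unit $\mathbf 1$, $\mathfrak k$ a $\mathbb K$-Lie algebra and $\mathfrak g=A\otimes\mathfrak k$. Then $\mathfrak g$ possesses coupled cocycles if and only if $d_A(A)\neq\{0\}$ and there is an invariant symmetric bilinear form $\kappa:\mathfrak k\times\mathfrak k\to\mathbb K$ such that $\Gamma(\kappa)$ is a non-zero coboundary in $Z^3(\mathfrak k)$. If this is not the case, then for every vector space $\mathfrak z$, every $\mathfrak z$-valued 2-cocycle $f=f_1\circ p_1+f_2\circ p_2+f_3\circ p_3$ on $\mathfrak g$ admits a decomposition $f_1=f_1^0+f_1^1$ (linear maps $\Lambda^2(A)\otimes S^2(\mathfrak k)\to\mathfrak z$) such that $f_1^0\circ p_1$, $f_1^1\circ p_1$, $f_2\circ p_2$, $f_3\circ p_3$ are each 2-cocycles and (a) $f_1^0\circ p_1$ vanishes on $\mathfrak g\times\mathfrak g'$; (b) $\tilde f_1^1$ takes values in the invariant symmetric bilinear maps $\mathfrak k\times\mathfrak k\to\mathfrak z$ and is a cyclic 1-cocycle; (c) $\tilde f_2(A)\subseteq Z^2(\mathfrak k,\mathfrak z)$; (d) $f_3\circ p_3$ vanishes on $\mathfrak g\times\mathfrak g'$.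
   Context: $\mathfrak g$ has bracket $[a\otimes x,a'\otimes x']=aa'\otimes[x,x']$; $ax=a\otimes x$; $\mathfrak k'=[\mathfrak k,\mathfrak k]$, $\mathfrak g'=A\otimes\mathfrak k'$. $v\wedge w=\tfrac12(v\otimes w-w\otimes v)$, $v\vee w=\tfrac12(v\otimes w+w\otimes v)$. $I_A\subseteq S^2(A)$ is the kernel of multiplication $S^2(A)\to A$. Linear maps $p_1(ax\wedge by)=a\wedge b\otimes x\vee y$, $p_2(ax\wedge by)=ab\otimes x\wedge y$, $p_3(ax\wedge by)=(a\vee b-ab\vee\mathbf 1)\otimes x\wedge y$ give an isomorphism $\Lambda^2(\mathfrak g)\cong(\Lambda^2(A)\otimes S^2(\mathfrak k))\oplus(A\otimes\Lambda^2(\mathfrak k))\oplus(I_A\otimes\Lambda^2(\mathfrak k))$, so every linear $f:\Lambda^2(\mathfrak g)\to\mathfrak z$ is uniquely $f_1\circ p_1+f_2\circ p_2+f_3\circ p_3$. Alternating bilinear maps on $\mathfrak g$ are identified with linear maps on $\Lambda^2(\mathfrak g)$ via $f(u,v)=f(u\wedge v)$. A $\mathfrak z$-valued 2-cocycle is such an $f$ vanishing on $\mathrm{span}\{[u,v]\wedge w+[v,w]\wedge u+[w,u]\wedge v\}$. $\tilde f_1(a,b)(x,y)=f_1(a\wedge b\otimes x\vee y)$, $\tilde f_2(a)(x,y)=f_2(a\otimes x\wedge y)$, similarly $\tilde f_1^1$. A coupled cocycle is a $\mathfrak z$-valued 2-cocycle (for some vector space $\mathfrak z$) with $f_3=0$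 for which $f_1\circ p_1$ is not a 2-cocycle; "$\mathfrak g$ possesses coupled cocycles" means one exists for some $\mathfrak z$. $(\Omega^1(A),d_A)$ is the universal differential module of $A$. Invariance: $\kappa([x,y],z)=\kappa(x,[y,z])$; $\Gamma(\kappa)(x,y,z)=\kappa([x,y],z)$. $Z^p(\mathfrak k,\mathfrak z)$, $B^p$ denote Chevalley–Eilenberg cocycles/coboundaries with trivial coefficients ($Z^3(\mathfrak k)$ for $\mathbb K$). A cyclic 1-cocycle is an alternating bilinear $\phi$ on $A$ with $\phi(a,bc)+\phi(b,ca)+\phi(c,ab)=0$. *)

theory Defs
  imports Main "HOL.Vector_Spaces"
begin

text \<open>
  The algebra A is a type 'a::comm_ring with K-scaling smA and unit e.
  The Lie algebra k is a type 'l with scaling smL and bracket br.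
  Since g = A (x) k and Lambda^2(g) are not available as types, a linear map
  f : Lambda^2(g) -> z (= alternating bilinear map on g) is encoded, via the
  universal property of the tensor product, by the 4-linear map
  F a x b y = f(ax, by), which must satisfy F a x b y = - F b y a x.
\<close>

definition is_lin :: "('k \<Rightarrow> 'b \<Rightarrow> 'b) \<Rightarrow> ('k \<Rightarrow> 'c \<Rightarrow> 'c) \<Rightarrow> ('b::plus \<Rightarrow> 'c::plus) \<Rightarrow> bool" where
  "is_lin s1 s2 f \<longleftrightarrow> (\<forall>u v. f (u + v) = f u + f v) \<and> (\<forall>c u. f (s1 c u) = s2 c (f u))"

text \<open>A unital commutative associative K-algebra (commutativity and associativity
  come from the class comm_ring; e is the unit).\<close>
definition comm_K_algebra :: "('k::field \<Rightarrow> 'a::comm_ring \<Rightarrow> 'a) \<Rightarrow> 'a \<Rightarrow> bool" where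
  "comm_K_algebra smA e \<longleftrightarrow> Vector_Spaces.vector_space smA
     \<and> (\<forall>c a b. smA c (a * b) = smA c a * b)
     \<and> (\<forall>a. e * a = a)"

definition lie_algebra :: "('k::field \<Rightarrow> 'l::ab_group_add \<Rightarrow> 'l) \<Rightarrow> ('l \<Rightarrow> 'l \<Rightarrow> 'l) \<Rightarrow> bool" where
  "lie_algebra smL br \<longleftrightarrow> Vector_Spaces.vector_space smL
     \<and> (\<forall>y. is_lin smL smL (\<lambda>x. br x y)) \<and> (\<forall>x. is_lin smL smL (\<lambda>y. br x y))
     \<and> (\<forall>x. br x x = 0)
     \<and> (\<forall>x y z. br x (br y z) + br y (br z x) + br z (br x y) = 0)"

text \<open>F encodes a linear map Lambda^2(g) -> z, i.e. F a x b y = f(a x \<and> b y).\<close>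
definition g_form :: "('k::field \<Rightarrow> 'a::comm_ring \<Rightarrow> 'a) \<Rightarrow> ('k \<Rightarrow> 'l::ab_group_add \<Rightarrow> 'l)
    \<Rightarrow> ('k \<Rightarrow> 'z::ab_group_add \<Rightarrow> 'z) \<Rightarrow> ('a \<Rightarrow> 'l \<Rightarrow> 'a \<Rightarrow> 'l \<Rightarrow> 'z) \<Rightarrow> bool" where
  "g_form smA smL smZ F \<longleftrightarrow>
     (\<forall>x b y. is_lin smA smZ (\<lambda>a. F a x b y)) \<and> (\<forall>a b y. is_lin smL smZ (\<lambda>x. F a x b y))
   \<and> (\<forall>a x y. is_lin smA smZ (\<lambda>b. F a x b y)) \<and> (\<forall>a x b. is_lin smL smZ (\<lambda>y. F a x b y))
   \<and> (\<forall>a x b y. F a x b y = - F b y a x)"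

text \<open>Cocycle condition: f vanishes on [u,v]\<and>w + [v,w]\<and>u + [w,u]\<and>v; by multilinearity
  it suffices (and is necessary) to check it on pure tensors u = a x, v = b y, w = c w,
  using [a x, b y] = ab [x,y].\<close>
definition g_cocycle :: "('l \<Rightarrow> 'l \<Rightarrow> 'l) \<Rightarrow> ('a::comm_ring \<Rightarrow> 'l \<Rightarrow> 'a \<Rightarrow> 'l \<Rightarrow> 'z::ab_group_add) \<Rightarrow> bool" where
  "g_cocycle br F \<longleftrightarrow> (\<forall>a b c x y w.
     F (a * b) (br x y) c w + F (b * c) (br y w) a x + F (c * a) (br w x) b y = 0)"

text \<open>f vanishes on g x g' where g' = A (x) [k,k] is spanned by b [y,w].\<close>
definition vanishes_g_g' :: "('l \<Rightarrow> 'l \<Rightarrow> 'l) \<Rightarrow> ('a \<Rightarrow> 'l \<Rightarrow> 'a \<Rightarrow> 'l \<Rightarrow> 'z::zero) \<Rightarrow> bool" where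
  "vanishes_g_g' br F \<longleftrightarrow> (\<forall>a x b y w. F a x b (br y w) = 0)"

text \<open>Components of f = f1 o p1 + f2 o p2 + f3 o p3:
  comp1 F a b x y = f1(a\<and>b \<otimes> x\<or>y)  (i.e. tilde f1 (a,b) (x,y)),
  comp2 F a x y   = f2(a \<otimes> x\<and>y)    (i.e. tilde f2 (a) (x,y)),
  comp3 F a b x y = f3((a\<or>b - ab\<or>1) \<otimes> x\<and>y).\<close>
definition comp1 :: "('k::field \<Rightarrow> 'z::ab_group_add \<Rightarrow> 'z) \<Rightarrow> ('a \<Rightarrow> 'l \<Rightarrow> 'a \<Rightarrow> 'l \<Rightarrow> 'z)
    \<Rightarrow> 'a \<Rightarrow> 'a \<Rightarrow> 'l \<Rightarrow> 'l \<Rightarrow> 'z" where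
  "comp1 smZ F a b x y = smZ (inverse 2) (F a x b y + F a y b x)"

definition comp2 :: "('k::field \<Rightarrow> 'z::ab_group_add \<Rightarrow> 'z) \<Rightarrow> 'a \<Rightarrow> ('a \<Rightarrow> 'l \<Rightarrow> 'a \<Rightarrow> 'l \<Rightarrow> 'z)
    \<Rightarrow> 'a \<Rightarrow> 'l \<Rightarrow> 'l \<Rightarrow> 'z" where
  "comp2 smZ e F a x y = smZ (inverse 2) (F a x e y - F a y e x)"

definition comp3 :: "('k::field \<Rightarrow> 'z::ab_group_add \<Rightarrow> 'z) \<Rightarrow> 'a::comm_ring \<Rightarrow> ('a \<Rightarrow> 'l \<Rightarrow> 'a \<Rightarrow> 'l \<Rightarrow> 'z)
    \<Rightarrow> 'a \<Rightarrow> 'a \<Rightarrow> 'l \<Rightarrow> 'l \<Rightarrow> 'z" where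
  "comp3 smZ e F a b x y = smZ (inverse 2) (F a x b y - F a y b x) - comp2 smZ e F (a * b) x y"

definition p1_form :: "('a \<Rightarrow> 'a \<Rightarrow> 'l \<Rightarrow> 'l \<Rightarrow> 'z) \<Rightarrow> 'a \<Rightarrow> 'l \<Rightarrow> 'a \<Rightarrow> 'l \<Rightarrow> 'z" where
  "p1_form G a x b y = G a b x y"

definition p2_form :: "('a::times \<Rightarrow> 'l \<Rightarrow> 'l \<Rightarrow> 'z) \<Rightarrow> 'a \<Rightarrow> 'l \<Rightarrow> 'a \<Rightarrow> 'l \<Rightarrow> 'z" where
  "p2_form H a x b y = H (a * b) x y"

definition p3_form :: "('a \<Rightarrow> 'a \<Rightarrow> 'l \<Rightarrow> 'l \<Rightarrow> 'z) \<Rightarrow> 'a \<Rightarrow> 'l \<Rightarrow> 'a \<Rightarrow> 'l \<Rightarrow> 'z" where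
  "p3_form K a x b y = K a b x y"

text \<open>G encodes a linear map Lambda^2(A) (x) S^2(k) -> z: G a b x y = f(a\<and>b \<otimes> x\<or>y).\<close>
definition LS_form :: "('k::field \<Rightarrow> 'a::comm_ring \<Rightarrow> 'a) \<Rightarrow> ('k \<Rightarrow> 'l::ab_group_add \<Rightarrow> 'l)
    \<Rightarrow> ('k \<Rightarrow> 'z::ab_group_add \<Rightarrow> 'z) \<Rightarrow> ('a \<Rightarrow> 'a \<Rightarrow> 'l \<Rightarrow> 'l \<Rightarrow> 'z) \<Rightarrow> bool" where
  "LS_form smA smL smZ G \<longleftrightarrow>
     (\<forall>b x y. is_lin smA smZ (\<lambda>a. G a b x y)) \<and> (\<forall>a x y. is_lin smA smZ (\<lambda>b. G a b x y))
   \<and> (\<forall>a b y. is_lin smL smZ (\<lambda>x. G a b x y)) \<and> (\<forall>a b x. is_lin smL smZ (\<lambda>y. G a b x y))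
   \<and> (\<forall>a b x y. G a b x y = - G b a x y) \<and> (\<forall>a b x y. G a b x y = G a b y x)"

definition g_2cocycle where
  "g_2cocycle smA smL smZ br F \<longleftrightarrow> g_form smA smL smZ F \<and> g_cocycle br F"

text \<open>Coupled cocycle: a 2-cocycle with f3 = 0 such that f1 o p1 is not a 2-cocycle.
  (f3 = 0 iff it vanishes on the spanning set (a\<or>b - ab\<or>1) \<otimes> x\<and>y of I_A \<otimes> Lambda^2 k.)\<close>
definition coupled_cocycle where
  "coupled_cocycle smA smL smZ br e F \<longleftrightarrow>
     g_2cocycle smA smL smZ br F
   \<and> (\<forall>a b x y. comp3 smZ e F a b x y = 0)
   \<and> \<not> g_cocycle br (p1_form (comp1 smZ F))"

text \<open>Universal differential module via the standard presentation: Omega^1(A) is the free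
  A-module on symbols d b (b \<in> A) modulo the A-submodule generated by the relations
  d(bc) - b dc - c db, d(b+c) - db - dc, d(\<lambda> b) - \<lambda> db.  Elements of the free module are
  coefficient functions A \<Rightarrow> A (finitely supported); kd e b is the generator d b.\<close>
definition kd :: "'a::comm_ring \<Rightarrow> 'a \<Rightarrow> 'a \<Rightarrow> 'a" where
  "kd e b = (\<lambda>t. if t = b then e else 0)"

inductive_set kahler_rel :: "('k::field \<Rightarrow> 'a::comm_ring \<Rightarrow> 'a) \<Rightarrow> 'a \<Rightarrow> ('a \<Rightarrow> 'a) set"
  for smA :: "'k::field \<Rightarrow> 'a::comm_ring \<Rightarrow> 'a" and e :: 'a where
  kr_zero: "(\<lambda>_. 0) \<in> kahler_rel smA e"
| kr_add: "u \<in> kahler_rel smA e \<Longrightarrow> v \<in> kahler_rel smA e \<Longrightarrow> (\<lambda>t. u t + v t) \<in> kahler_rel smA e"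
| kr_mult: "u \<in> kahler_rel smA e \<Longrightarrow> (\<lambda>t. c * u t) \<in> kahler_rel smA e"
| kr_scale: "u \<in> kahler_rel smA e \<Longrightarrow> (\<lambda>t. smA k (u t)) \<in> kahler_rel smA e"
| kr_leibniz: "(\<lambda>t. kd e (b * c) t - b * kd e c t - c * kd e b t) \<in> kahler_rel smA e"
| kr_additive: "(\<lambda>t. kd e (b + c) t - kd e b t - kd e c t) \<in> kahler_rel smA e"
| kr_homog: "(\<lambda>t. kd e (smA k b) t - smA k (kd e b t)) \<in> kahler_rel smA e"

definition dA_nonzero :: "('k::field \<Rightarrow> 'a::comm_ring \<Rightarrow> 'a) \<Rightarrow> 'a \<Rightarrow> bool" where
  "dA_nonzero smA e \<longleftrightarrow> (\<exists>a. kd e a \<notin> kahler_rel smA e)"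

text \<open>There is an invariant symmetric bilinear form \<kappa> on k with \<Gamma>(\<kappa>) a non-zero
  coboundary in Z^3(k) (trivial coefficients K): \<Gamma>(\<kappa>) = d\<omega> for an alternating bilinear
  \<omega> : k \<times> k \<rightarrow> K, with (d\<omega>)(x,y,z) = -\<omega>([x,y],z) + \<omega>([x,z],y) - \<omega>([y,z],x).\<close>
definition Gamma_cond :: "('k::field \<Rightarrow> 'l::ab_group_add \<Rightarrow> 'l) \<Rightarrow> ('l \<Rightarrow> 'l \<Rightarrow> 'l) \<Rightarrow> bool" where
  "Gamma_cond smL br \<longleftrightarrow> (\<exists>\<kappa> :: 'l \<Rightarrow> 'l \<Rightarrow> 'k.
      (\<forall>y. is_lin smL (*) (\<lambda>x. \<kappa> x y)) \<and> (\<forall>x. is_lin smL (*) (\<lambda>y. \<kappa> x y))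
    \<and> (\<forall>x y. \<kappa> x y = \<kappa> y x)
    \<and> (\<forall>x y z. \<kappa> (br x y) z = \<kappa> x (br y z))
    \<and> (\<exists>x y z. \<kappa> (br x y) z \<noteq> 0)
    \<and> (\<exists>\<omega> :: 'l \<Rightarrow> 'l \<Rightarrow> 'k.
          (\<forall>y. is_lin smL (*) (\<lambda>x. \<omega> x y)) \<and> (\<forall>x. is_lin smL (*) (\<lambda>y. \<omega> x y))
        \<and> (\<forall>x. \<omega> x x = 0)
        \<and> (\<forall>x y z. \<kappa> (br x y) z = - \<omega> (br x y) z + \<omega> (br x z) y - \<omega> (br y z) x)))"

definition good_decomposition where
  "good_decomposition smA smL smZ br e F \<longleftrightarrow> (\<exists>G0 G1.
      LS_form smA smL smZ G0 \<and> LS_form smA smL smZ G1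
    \<and> (\<forall>a b x y. comp1 smZ F a b x y = G0 a b x y + G1 a b x y)
    \<and> g_cocycle br (p1_form G0) \<and> g_cocycle br (p1_form G1)
    \<and> g_cocycle br (p2_form (comp2 smZ e F)) \<and> g_cocycle br (p3_form (comp3 smZ e F))
    \<comment> \<open>(a)\<close>
    \<and> vanishes_g_g' br (p1_form G0)
    \<comment> \<open>(b): values invariant (symmetric bilinear by LS_form) and cyclic 1-cocycle\<close>
    \<and> (\<forall>a b x y w. G1 a b (br x y) w = G1 a b x (br y w))
    \<and> (\<forall>a b c x y. G1 a (b * c) x y + G1 b (c * a) x y + G1 c (a * b) x y = 0)
    \<comment> \<open>(c)\<close>
    \<and> (\<forall>a x y w. comp2 smZ e F a (br x y) w + comp2 smZ e F a (br y w) x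
                   + comp2 smZ e F a (br w x) y = 0)
    \<comment> \<open>(d)\<close>
    \<and> vanishes_g_g' br (p3_form (comp3 smZ e F)))"

end

theory Submission
  imports Defs "HOL-Library.Function_Algebras"
begin


lemma vs_field: "Vector_Spaces.vector_space ((*) :: 'k::field \<Rightarrow> 'k \<Rightarrow> 'k)"
  by unfold_locales (simp_all add: algebra_simps)

lemma linear_is_lin: "Vector_Spaces.linear s1 s2 f \<Longrightarrow> is_lin s1 s2 f"
  by (simp add: Vector_Spaces.linear_iff is_lin_def)

context vector_space begin

lemma functional_sep:
  assumes S: "subspace S" and v: "v \<notin> S"
  shows "\<exists>f. is_lin scale ((*)::'a\<Rightarrow>'a\<Rightarrow>'a) f \<and> (\<forall>u\<in>S. f u = 0) \<and> f v = 1"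
proof -
  interpret p: vector_space_pair scale "(*)::'a\<Rightarrow>'a\<Rightarrow>'a"
    by (simp add: vector_space_pair_def vs_field vector_space_axioms)
  obtain B where B: "B \<subseteq> S" "independent B" "S \<subseteq> span B"
    using maximal_independent_subset by blast
  have sB: "span B \<subseteq> S" using B(1) S span_minimal by blast
  have vB: "v \<notin> span B" using sB v by blast
  have ind: "independent (insert v B)" using independent_insertI[OF vB B(2)] .
  obtain g where g: "Vector_Spaces.linear scale (*) g" "\<forall>x\<in>insert v B. g x = (if x = v then 1 else 0)"
    using p.linear_independent_extend[OF ind, of "\<lambda>x. if x = v then 1 else 0"] by blast
  have lz: "Vector_Spaces.linear scale ((*)::'a\<Rightarrow>'a\<Rightarrow>'a) (\<lambda>x. 0)"
    using p.module_hom_zero module_hom_iff_linear by blast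
  have "\<forall>u\<in>S. g u = 0"
  proof
    fix u assume "u \<in> S"
    then have "u \<in> span B" using B(3) by blast
    then show "g u = 0"
      using p.linear_eq_on[OF g(1) lz, of u B] g(2) vB span_base by fastforce
  qed
  then show ?thesis using g linear_is_lin by fastforce
qed

lemma projection_exists:
  "\<exists>P. is_lin scale scale P \<and> (\<forall>v\<in>span X. P v = v) \<and> (\<forall>v. P v \<in> span X)"
proof -
  interpret p: vector_space_pair scale scale
    by (simp add: vector_space_pair_def vector_space_axioms)
  obtain B where B: "B \<subseteq> span X" "independent B" "span X \<subseteq> span B"
    using maximal_independent_subset by blast
  have sB: "span B = span X" using B span_minimal[OF B(1)] by blast
  obtain g where g: "Vector_Spaces.linear scale scale g" "\<forall>x\<in>B. g x = id x" "range g = span (id ` B)"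
    using p.linear_independent_extend_subspace[OF B(2)] by blast
  have lid: "Vector_Spaces.linear scale scale id"
    using module_hom_id module_hom_iff_linear by blast
  have "\<forall>v\<in>span X. g v = v"
    using p.linear_eq_on[OF g(1) lid] g(2) sB by fastforce
  moreover have "\<forall>v. g v \<in> span X" using g(3) sB by auto
  ultimately show ?thesis using g(1) linear_is_lin by blast
qed

end


lemma is_lin_add: "is_lin s1 s2 f \<Longrightarrow> f (u + v) = f u + f v" by (simp add: is_lin_def)
lemma is_lin_scale: "is_lin s1 s2 f \<Longrightarrow> f (s1 c u) = s2 c (f u)" by (simp add: is_lin_def)
lemma is_lin_zero: "is_lin s1 s2 (f::'b::ab_group_add \<Rightarrow> 'c::ab_group_add) \<Longrightarrow> f 0 = 0"
proof -
  assume h: "is_lin s1 s2 f"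
  have "f 0 + f 0 = f 0 + 0" using is_lin_add[OF h, of 0 0] by simp
  then show ?thesis by (simp only: add_left_cancel)
qed
lemma is_lin_neg: "is_lin s1 s2 (f::'b::ab_group_add \<Rightarrow> 'c::ab_group_add) \<Longrightarrow> f (- u) = - f u"
proof -
  assume h: "is_lin s1 s2 f"
  have "f u + f (- u) = 0" using is_lin_add[OF h, of u "- u"] is_lin_zero[OF h] by simp
  then show ?thesis by (simp add: eq_neg_iff_add_eq_0 add.commute)
qed
lemma is_lin_diff: "is_lin s1 s2 (f::'b::ab_group_add \<Rightarrow> 'c::ab_group_add) \<Longrightarrow> f (u - v) = f u - f v"
  by (simp only: diff_conv_add_uminus is_lin_add is_lin_neg)
lemma is_lin_comp: "is_lin s1 s2 f \<Longrightarrow> is_lin s2 s3 g \<Longrightarrow> is_lin s1 s3 (\<lambda>x. g (f x))"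
  unfolding is_lin_def by simp

context vector_space begin
lemma is_lin_plus: "is_lin s1 scale f \<Longrightarrow> is_lin s1 scale g \<Longrightarrow> is_lin s1 scale (\<lambda>u. f u + g u)"
  unfolding is_lin_def by (simp add: add_ac scale_right_distrib)
lemma is_lin_minus: "is_lin s1 scale (f::_ \<Rightarrow> 'b) \<Longrightarrow> is_lin s1 scale g \<Longrightarrow> is_lin s1 scale (\<lambda>u. f u - g u)"
  unfolding is_lin_def by (simp add: diff_add_eq add_diff_eq diff_diff_eq add_ac scale_right_diff_distrib)
lemma is_lin_sc: "is_lin s1 scale f \<Longrightarrow> is_lin s1 scale (\<lambda>u. scale c (f u))"
  unfolding is_lin_def by (simp add: scale_right_distrib mult.commute)
lemma twice_zero: "(2::'a) \<noteq> 0 \<Longrightarrow> (v::'b) + v = 0 \<Longrightarrow> v = 0"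
proof -
  assume "(2::'a) \<noteq> 0" "v + v = 0"
  then have "scale (1 + 1) v = 0" by (simp only: scale_left_distrib scale_one)
  then have "scale 2 v = 0" by simp
  then show ?thesis using \<open>(2::'a) \<noteq> 0\<close> by simp
qed
lemma half_half: "(2::'a) \<noteq> 0 \<Longrightarrow> scale (inverse 2) (p + q) + scale (inverse 2) (p - q) = (p::'b)"
proof -
  assume t: "(2::'a) \<noteq> 0"
  have "scale (inverse 2) (p + q) + scale (inverse 2) (p - q) = scale (inverse 2) ((p + q) + (p - q))"
    by (simp only: scale_right_distrib)
  also have "(p + q) + (p - q) = scale 2 p"
  proof -
    have "(p + q) + (p - q) = p + p" by (simp add: algebra_simps)
    also have "\<dots> = scale (1 + 1) p" by (simp only: scale_left_distrib scale_one)
    also have "(1 + 1 :: 'a) = 2" by simp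
    finally show ?thesis .
  qed
  also have "scale (inverse 2) (scale 2 p) = p" using t by simp
  finally show ?thesis .
qed
end

locale setting =
  fixes smA :: "'k::field \<Rightarrow> 'a::comm_ring \<Rightarrow> 'a" and e :: 'a
    and smL :: "'k \<Rightarrow> 'l::ab_group_add \<Rightarrow> 'l" and br :: "'l \<Rightarrow> 'l \<Rightarrow> 'l"
    and smZ :: "'k \<Rightarrow> 'z::ab_group_add \<Rightarrow> 'z"
  assumes two: "(2::'k) \<noteq> 0"
    and A: "comm_K_algebra smA e"
    and L: "lie_algebra smL br"
    and Z: "Vector_Spaces.vector_space smZ"
begin

sublocale Zv: vector_space smZ by (rule Z)
sublocale Lv: vector_space smL using L by (simp add: lie_algebra_def)
sublocale Av: vector_space smA using A by (simp add: comm_K_algebra_def)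

lemma e_l[simp]: "e * a = a" using A by (simp add: comm_K_algebra_def)
lemma e_r[simp]: "a * e = a" using e_l by (simp add: mult.commute)
lemma smA_mult: "smA c (a * b) = smA c a * b" using A by (simp add: comm_K_algebra_def)
lemma mult_smA: "b * smA c a = smA c (b * a)" using smA_mult by (simp add: mult.commute)

lemma br_lin1: "is_lin smL smL (\<lambda>x. br x y)" using L by (simp add: lie_algebra_def)
lemma br_lin2: "is_lin smL smL (\<lambda>y. br x y)" using L by (simp add: lie_algebra_def)
lemma br_self: "br x x = 0" using L by (simp add: lie_algebra_def)
lemma br_swap: "br x y = - br y x"
proof -
  have "0 = br (x + y) (x + y)" by (simp add: br_self)
  also have "\<dots> = br x x + br x y + (br y x + br y y)"
    using is_lin_add[OF br_lin1] is_lin_add[OF br_lin2] by (simp add: add.assoc)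
  finally show ?thesis by (simp add: br_self add_eq_0_iff2)
qed

end

locale cocyc = setting smA e smL br smZ
  for smA :: "'k::field \<Rightarrow> 'a::comm_ring \<Rightarrow> 'a" and e :: 'a
    and smL :: "'k \<Rightarrow> 'l::ab_group_add \<Rightarrow> 'l" and br :: "'l \<Rightarrow> 'l \<Rightarrow> 'l"
    and smZ :: "'k \<Rightarrow> 'z::ab_group_add \<Rightarrow> 'z" +
  fixes F :: "'a \<Rightarrow> 'l \<Rightarrow> 'a \<Rightarrow> 'l \<Rightarrow> 'z"
  assumes gf: "g_form smA smL smZ F" and gc: "g_cocycle br F"
begin

abbreviation "Gs \<equiv> comp1 smZ F"
abbreviation "H \<equiv> comp2 smZ e F"
abbreviation "K \<equiv> comp3 smZ e F"

lemma F1: "is_lin smA smZ (\<lambda>a. F a x b y)" using gf unfolding g_form_def by blast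
lemma F2: "is_lin smL smZ (\<lambda>x. F a x b y)" using gf unfolding g_form_def by blast
lemma F3: "is_lin smA smZ (\<lambda>b. F a x b y)" using gf unfolding g_form_def by blast
lemma F4: "is_lin smL smZ (\<lambda>y. F a x b y)" using gf unfolding g_form_def by blast
lemma Fskew: "F a x b y = - F b y a x" using gf unfolding g_form_def by blast
lemma cc: "F (a * b) (br x y) c w + F (b * c) (br y w) a x + F (c * a) (br w x) b y = 0"
  using gc unfolding g_cocycle_def by blast

lemma Gs_def': "Gs a b x y = smZ (inverse 2) (F a x b y + F a y b x)" by (simp add: comp1_def)
lemma H_def': "H t x y = smZ (inverse 2) (F t x e y - F t y e x)" by (simp add: comp2_def)
lemma K_def': "K a b x y = smZ (inverse 2) (F a x b y - F a y b x) - H (a * b) x y" by (simp add: comp3_def)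

lemma Gs_la: "is_lin smA smZ (\<lambda>a. Gs a b x y)"
  unfolding Gs_def' by (rule Zv.is_lin_sc, rule Zv.is_lin_plus, rule F1, rule F1)
lemma Gs_lb: "is_lin smA smZ (\<lambda>b. Gs a b x y)"
  unfolding Gs_def' by (rule Zv.is_lin_sc, rule Zv.is_lin_plus, rule F3, rule F3)
lemma Gs_lx: "is_lin smL smZ (\<lambda>x. Gs a b x y)"
  unfolding Gs_def' by (rule Zv.is_lin_sc, rule Zv.is_lin_plus, rule F2, rule F4)
lemma Gs_ly: "is_lin smL smZ (\<lambda>y. Gs a b x y)"
  unfolding Gs_def' by (rule Zv.is_lin_sc, rule Zv.is_lin_plus, rule F4, rule F2)
lemma H_lt: "is_lin smA smZ (\<lambda>t. H t x y)"
  unfolding H_def' by (rule Zv.is_lin_sc, rule Zv.is_lin_minus, rule F1, rule F1)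
lemma H_lx: "is_lin smL smZ (\<lambda>x. H t x y)"
  unfolding H_def' by (rule Zv.is_lin_sc, rule Zv.is_lin_minus, rule F2, rule F4)
lemma H_ly: "is_lin smL smZ (\<lambda>y. H t x y)"
  unfolding H_def' by (rule Zv.is_lin_sc, rule Zv.is_lin_minus, rule F4, rule F2)
lemma K_lx: "is_lin smL smZ (\<lambda>x. K a b x y)"
  unfolding K_def' by (rule Zv.is_lin_minus, rule Zv.is_lin_sc, rule Zv.is_lin_minus, rule F2, rule F4, rule H_lx)
lemma K_ly: "is_lin smL smZ (\<lambda>y. K a b x y)"
  unfolding K_def' by (rule Zv.is_lin_minus, rule Zv.is_lin_sc, rule Zv.is_lin_minus, rule F4, rule F2, rule H_ly)

lemma Gs_neg3: "Gs a b (- x) y = - Gs a b x y" by (rule is_lin_neg[OF Gs_lx])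
lemma Gs_neg4: "Gs a b x (- y) = - Gs a b x y" by (rule is_lin_neg[OF Gs_ly])
lemma H_neg2: "H t (- x) y = - H t x y" by (rule is_lin_neg[OF H_lx])
lemma H_neg3: "H t x (- y) = - H t x y" by (rule is_lin_neg[OF H_ly])
lemma K_neg3: "K a b (- x) y = - K a b x y" by (rule is_lin_neg[OF K_lx])
lemma K_neg4: "K a b x (- y) = - K a b x y" by (rule is_lin_neg[OF K_ly])
lemmas negs = Gs_neg3 Gs_neg4 H_neg2 H_neg3 K_neg3 K_neg4

lemma Gs_sym: "Gs a b x y = Gs a b y x" by (simp add: Gs_def' add.commute)
lemma Gs_anti: "Gs b a x y = - Gs a b x y"
  by (simp add: Gs_def' Fskew[of b x a y] Fskew[of b y a x] flip: Zv.scale_minus_right)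
lemma H_anti: "H t y x = - H t x y"
  by (simp add: H_def' flip: Zv.scale_minus_right)
lemma H_self: "H t x x = 0" by (simp add: H_def')
lemma K_sym: "K b a x y = K a b x y"
  by (simp add: K_def' Fskew[of b x a y] Fskew[of b y a x] mult.commute)
lemma K_e: "K a e x y = 0" by (simp add: K_def' H_def')
lemma Fdec: "F a x b y = Gs a b x y + H (a * b) x y + K a b x y"
proof -
  have "Gs a b x y + H (a * b) x y + K a b x y
     = smZ (inverse 2) (F a x b y + F a y b x) + smZ (inverse 2) (F a x b y - F a y b x)"
    by (simp add: Gs_def' K_def')
  also have "\<dots> = F a x b y" by (rule Zv.half_half[OF two])
  finally show ?thesis by simp
qed
lemma F_te: "F t u e v = Gs t e u v + H t u v" by (simp add: Fdec K_e)
lemma F_et: "F e u t v = - Gs t e u v + H t u v"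
  by (simp add: Fdec Gs_anti[of e t] K_sym[of e t] K_e)
lemma F_ab: "F a u b v = Gs a b u v + H (a * b) u v + K a b u v" by (rule Fdec)
lemma F_ba: "F b u a v = - Gs a b u v + H (a * b) u v + K a b u v"
  by (simp add: Fdec Gs_anti[of b a] K_sym[of b a] mult.commute)

end


context cocyc begin

lemma stepA_raw:
  "Gs t e (br x y) w + H t (br x y) w - Gs t e (br y w) x + H t (br y w) x
   + Gs t e (br w x) y + H t (br w x) y = 0"
proof -
  have "F (t * e) (br x y) e w + F (e * e) (br y w) t x + F (e * t) (br w x) e y = 0" by (rule cc)
  then show ?thesis by (simp add: F_te F_et algebra_simps)
qed

lemma invA: "Gs t e (br w x) y = Gs t e (br y w) x"
proof -
  have 1: "Gs t e (br x y) w + H t (br x y) w - Gs t e (br y w) x + H t (br y w) x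
   + Gs t e (br w x) y + H t (br w x) y = 0" by (rule stepA_raw)
  have 2: "Gs t e (br y x) w + H t (br y x) w - Gs t e (br x w) y + H t (br x w) y
   + Gs t e (br w y) x + H t (br w y) x = 0" by (rule stepA_raw)
  have 2: "- Gs t e (br x y) w - H t (br x y) w + Gs t e (br w x) y - H t (br w x) y
   - Gs t e (br y w) x - H t (br y w) x = 0"
    using 2 by (simp add: br_swap[of y x] br_swap[of x w] br_swap[of w y] negs algebra_simps)
  have "(Gs t e (br w x) y - Gs t e (br y w) x) + (Gs t e (br w x) y - Gs t e (br y w) x) = 0"
  proof -
    have "(Gs t e (br w x) y - Gs t e (br y w) x) + (Gs t e (br w x) y - Gs t e (br y w) x)
      = (Gs t e (br x y) w + H t (br x y) w - Gs t e (br y w) x + H t (br y w) x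
   + Gs t e (br w x) y + H t (br w x) y) + (- Gs t e (br x y) w - H t (br x y) w + Gs t e (br w x) y - H t (br w x) y
   - Gs t e (br y w) x - H t (br y w) x)" by (simp add: algebra_simps)
    then show ?thesis using 1 2 by simp
  qed
  then have "Gs t e (br w x) y - Gs t e (br y w) x = 0" by (rule Zv.twice_zero[OF two])
  then show ?thesis by simp
qed

lemma stepA: "Gs t e (br x y) w + (H t (br x y) w + H t (br y w) x + H t (br w x) y) = 0"
proof -
  have "Gs t e (br x y) w + (H t (br x y) w + H t (br y w) x + H t (br w x) y)
    = Gs t e (br x y) w + H t (br x y) w - Gs t e (br y w) x + H t (br y w) x
   + Gs t e (br w x) y + H t (br w x) y" using invA[of t w x y] by (simp add: algebra_simps)
  then show ?thesis using stepA_raw by simp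
qed

end


context cocyc begin

lemma rawB: "- Gs a b (br y w) x + K a b (br y w) x + Gs a b (br w x) y + K a b (br w x) y = 0"
proof -
  have c1: "F (a * b) (br x y) e w + F (b * e) (br y w) a x + F (e * a) (br w x) b y = 0" by (rule cc)
  have c2: "F ((a * b) * e) (br x y) e w + F (e * e) (br y w) (a * b) x + F (e * (a * b)) (br w x) e y = 0" by (rule cc)
  have "- Gs a b (br y w) x + K a b (br y w) x + Gs a b (br w x) y + K a b (br w x) y
     = (F (a * b) (br x y) e w + F b (br y w) a x + F a (br w x) b y)
     - (F (a * b) (br x y) e w + F e (br y w) (a * b) x + F (a * b) (br w x) e y)"
    by (simp add: F_ba[where b=b and a=a and u="br y w" and v=x] F_ab[where a=a and b=b and u="br w x" and v=y]
       F_et[where t="a*b" and u="br y w" and v=x] F_te[where t="a*b" and u="br w x" and v=y]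
       invA[of "a*b" w x y] algebra_simps)
  also have "\<dots> = 0" using c1 c2 by simp
  finally show ?thesis .
qed

lemma inv_gen: "Gs a b (br w x) y = Gs a b (br y w) x"
proof -
  have 1: "- Gs a b (br y w) x + K a b (br y w) x + Gs a b (br w x) y + K a b (br w x) y = 0" by (rule rawB)
  have 2: "- Gs a b (br x w) y + K a b (br x w) y + Gs a b (br w y) x + K a b (br w y) x = 0" by (rule rawB)
  have "(Gs a b (br w x) y - Gs a b (br y w) x) + (Gs a b (br w x) y - Gs a b (br y w) x)
     = (- Gs a b (br y w) x + K a b (br y w) x + Gs a b (br w x) y + K a b (br w x) y)
     + (- Gs a b (br x w) y + K a b (br x w) y + Gs a b (br w y) x + K a b (br w y) x)"
    by (simp add: br_swap[of x w] br_swap[of w y] negs algebra_simps)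
  also have "\<dots> = 0" using 1 2 by simp
  finally have "Gs a b (br w x) y - Gs a b (br y w) x = 0" by (rule Zv.twice_zero[OF two])
  then show ?thesis by simp
qed

lemma K_cyc: "K a b (br w x) y = - K a b (br y w) x"
proof -
  have 1: "- Gs a b (br y w) x + K a b (br y w) x + Gs a b (br w x) y + K a b (br w x) y = 0" by (rule rawB)
  have 2: "- Gs a b (br x w) y + K a b (br x w) y + Gs a b (br w y) x + K a b (br w y) x = 0" by (rule rawB)
  have "(K a b (br w x) y + K a b (br y w) x) + (K a b (br w x) y + K a b (br y w) x)
     = (- Gs a b (br y w) x + K a b (br y w) x + Gs a b (br w x) y + K a b (br w x) y)
     - (- Gs a b (br x w) y + K a b (br x w) y + Gs a b (br w y) x + K a b (br w y) x)"
    by (simp add: br_swap[of x w] br_swap[of w y] negs algebra_simps)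
  also have "\<dots> = 0" using 1 2 by simp
  finally have "K a b (br w x) y + K a b (br y w) x = 0" by (rule Zv.twice_zero[OF two])
  then show ?thesis by (simp add: eq_neg_iff_add_eq_0)
qed

lemma K_br: "K a b (br w x) y = 0"
proof -
  have "K a b (br w x) y = - K a b (br y w) x" by (rule K_cyc)
  also have "K a b (br y w) x = - K a b (br x y) w" by (rule K_cyc)
  also have "K a b (br x y) w = - K a b (br w x) y" by (rule K_cyc)
  finally have h: "K a b (br w x) y = - (- (- K a b (br w x) y))" .
  then have h': "K a b (br w x) y = - K a b (br w x) y" by (simp only: minus_minus)
  have "K a b (br w x) y + K a b (br w x) y = - K a b (br w x) y + K a b (br w x) y"
    using h' by (rule arg_cong[where f="\<lambda>u. u + K a b (br w x) y"])
  then have "K a b (br w x) y + K a b (br w x) y = 0" by (simp only: left_minus)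
  then show ?thesis by (rule Zv.twice_zero[OF two])
qed

lemma K_br2: "K a b x (br y w) = 0"
proof -
  have "K a b x (br y w) = - K a b (br y w) x"
    by (simp add: K_def' H_anti[of "a*b" "br y w" x] flip: Zv.scale_minus_right)
  then show ?thesis by (simp add: K_br)
qed

lemma Gs_inv: "Gs a b (br x y) w = Gs a b x (br y w)"
proof -
  have "Gs a b x (br y w) = Gs a b (br y w) x" by (rule Gs_sym)
  also have "\<dots> = Gs a b (br x y) w" using inv_gen[of a b y w x] by simp
  finally show ?thesis by simp
qed

lemma E4: "Gs (a * b) c (br x y) w + Gs (b * c) a (br x y) w + Gs (c * a) b (br x y) w
   = Gs (a * b * c) e (br x y) w"
proof -
  have c: "F (a * b) (br x y) c w + F (b * c) (br y w) a x + F (c * a) (br w x) b y = 0" by (rule cc)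
  have f1: "F (a * b) (br x y) c w = Gs (a * b) c (br x y) w + H (a * b * c) (br x y) w + K (a * b) c (br x y) w" by (rule F_ab)
  have f2: "F (b * c) (br y w) a x = Gs (b * c) a (br y w) x + H (b * c * a) (br y w) x + K (b * c) a (br y w) x" by (rule F_ab)
  have f3: "F (c * a) (br w x) b y = Gs (c * a) b (br w x) y + H (c * a * b) (br w x) y + K (c * a) b (br w x) y" by (rule F_ab)
  have p1: "b * c * a = a * b * c" "c * a * b = a * b * c" by (simp_all add: mult_ac)
  have i1: "Gs (b * c) a (br y w) x = Gs (b * c) a (br x y) w" using inv_gen[of "b*c" a y w x] by simp
  have i2: "Gs (c * a) b (br w x) y = Gs (c * a) b (br x y) w" using inv_gen[of "c*a" b x y w] by simp
  have c2: "Gs (a * b) c (br x y) w + H (a * b * c) (br x y) w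
     + (Gs (b * c) a (br x y) w + H (a * b * c) (br y w) x)
     + (Gs (c * a) b (br x y) w + H (a * b * c) (br w x) y) = 0"
    using c unfolding f1 f2 f3 p1 i1 i2 K_br by simp
  have sA: "Gs (a * b * c) e (br x y) w + (H (a * b * c) (br x y) w + H (a * b * c) (br y w) x + H (a * b * c) (br w x) y) = 0"
    by (rule stepA)
  have "Gs (a * b) c (br x y) w + Gs (b * c) a (br x y) w + Gs (c * a) b (br x y) w
   - Gs (a * b * c) e (br x y) w
    = (Gs (a * b) c (br x y) w + H (a * b * c) (br x y) w
     + (Gs (b * c) a (br x y) w + H (a * b * c) (br y w) x)
     + (Gs (c * a) b (br x y) w + H (a * b * c) (br w x) y))
     - (Gs (a * b * c) e (br x y) w + (H (a * b * c) (br x y) w + H (a * b * c) (br y w) x + H (a * b * c) (br w x) y))"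
    by (simp add: algebra_simps)
  also have "\<dots> = 0" using c2 sA by simp
  finally show ?thesis by simp
qed

end


context cocyc begin

lemma H_lin_neg_swap: "H t (br z x) y = - H t (br x z) y"
  by (subst br_swap[of z x]) (rule H_neg2)

lemma Gamma_rel: "Gs t e (br x y) z = - H t (br x y) z + H t (br x z) y - H t (br y z) x"
proof -
  have "Gs t e (br x y) z + (H t (br x y) z + H t (br y z) x + H t (br z x) y) = 0" by (rule stepA)
  then have "Gs t e (br x y) z = - (H t (br x y) z + H t (br y z) x + H t (br z x) y)"
    by (simp only: eq_neg_iff_add_eq_0)
  then show ?thesis by (simp add: H_lin_neg_swap[of t z x y] algebra_simps)
qed

lemma stepD_Gamma:
  assumes nG: "\<not> Gamma_cond smL br"
  shows "Gs t e (br x0 y0) w0 = 0"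
proof (rule ccontr)
  assume v0: "Gs t e (br x0 y0) w0 \<noteq> 0"
  obtain \<mu> where mu: "is_lin smZ (*) \<mu>" "\<mu> (Gs t e (br x0 y0) w0) = 1"
    using Zv.functional_sep[of "{0}" "Gs t e (br x0 y0) w0"] v0 by auto
  have k1: "\<forall>y. is_lin smL (*) (\<lambda>x. \<mu> (Gs t e x y))" using is_lin_comp[OF Gs_lx mu(1)] by blast
  have k2: "\<forall>x. is_lin smL (*) (\<lambda>y. \<mu> (Gs t e x y))" using is_lin_comp[OF Gs_ly mu(1)] by blast
  have k3: "\<forall>x y. \<mu> (Gs t e x y) = \<mu> (Gs t e y x)" by (simp add: Gs_sym[of t e])
  have k4: "\<forall>x y z. \<mu> (Gs t e (br x y) z) = \<mu> (Gs t e x (br y z))" by (simp add: Gs_inv)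
  have k5: "\<exists>x y z. \<mu> (Gs t e (br x y) z) \<noteq> 0" using mu(2) by (intro exI[of _ x0] exI[of _ y0] exI[of _ w0]) simp
  have o1: "\<forall>y. is_lin smL (*) (\<lambda>x. \<mu> (H t x y))" using is_lin_comp[OF H_lx mu(1)] by blast
  have o2: "\<forall>x. is_lin smL (*) (\<lambda>y. \<mu> (H t x y))" using is_lin_comp[OF H_ly mu(1)] by blast
  have o3: "\<forall>x. \<mu> (H t x x) = 0" by (simp add: H_self is_lin_zero[OF mu(1)])
  have o4: "\<forall>x y z. \<mu> (Gs t e (br x y) z) = - \<mu> (H t (br x y) z) + \<mu> (H t (br x z) y) - \<mu> (H t (br y z) x)"
    by (simp add: Gamma_rel is_lin_add[OF mu(1)] is_lin_neg[OF mu(1)] is_lin_diff[OF mu(1)])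
  have "Gamma_cond smL br"
    unfolding Gamma_cond_def
    apply (rule exI[where x="\<lambda>x y. \<mu> (Gs t e x y)"])
    apply (intro conjI k1 k2 k3 k4 k5)
    apply (rule exI[where x="\<lambda>x y. \<mu> (H t x y)"])
    apply (intro conjI o1 o2 o3 o4)
    done
  then show False using nG by simp
qed

end


lemma lincomb1: "(L::'z::ab_group_add) - R = P - Q \<Longrightarrow> P = Q \<Longrightarrow> L = R" by simp
lemma lincomb1n: "(L::'z::ab_group_add) - R = - (P - Q) \<Longrightarrow> P = Q \<Longrightarrow> L = R" by simp
lemma lincomb2: "(L::'z::ab_group_add) - R = (P - Q) + (P' - Q') \<Longrightarrow> P = Q \<Longrightarrow> P' = Q' \<Longrightarrow> L = R" by simp
lemma lincomb2m: "(L::'z::ab_group_add) - R = (P - Q) - (P' - Q') \<Longrightarrow> P = Q \<Longrightarrow> P' = Q' \<Longrightarrow> L = R" by simp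

context cocyc begin

definition Dd where "Dd x y w b s = Gs s b (br x y) w - Gs (s * b) e (br x y) w"

lemma mulr_lin: "is_lin smA smA (\<lambda>s. s * b)"
  unfolding is_lin_def by (simp add: distrib_right smA_mult)

lemma Dd_lin: "is_lin smA smZ (\<lambda>s. Dd x y w b s)"
  unfolding Dd_def by (rule Zv.is_lin_minus[OF Gs_la is_lin_comp[OF mulr_lin Gs_la]])

lemma Dd_zero: "Dd x y w b 0 = 0" using is_lin_zero[OF Dd_lin] by simp
lemma Dd_add_s: "Dd x y w b (s + s') = Dd x y w b s + Dd x y w b s'" using is_lin_add[OF Dd_lin] by simp
lemma Dd_diff_s: "Dd x y w b (s - s') = Dd x y w b s - Dd x y w b s'" using is_lin_diff[OF Dd_lin] by simp
lemma Dd_scale_s: "Dd x y w b (smA k s) = smZ k (Dd x y w b s)" using is_lin_scale[OF Dd_lin] by simp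

lemma Dd_add_b: "Dd x y w (b + c) s = Dd x y w b s + Dd x y w c s"
  unfolding Dd_def
  by (simp add: is_lin_add[OF Gs_lb] distrib_left is_lin_add[OF Gs_la] algebra_simps)

lemma Dd_scale_b: "Dd x y w (smA k b) s = smZ k (Dd x y w b s)"
  unfolding Dd_def
  by (simp add: is_lin_scale[OF Gs_lb] mult_smA is_lin_scale[OF Gs_la] Zv.scale_right_diff_distrib)

lemma Dd_leib: "Dd x y w (b * c) s = Dd x y w c (b * s) + Dd x y w b (c * s)"
proof -
  have E: "Gs (b * s) c (br x y) w + Gs (s * c) b (br x y) w + Gs (c * b) s (br x y) w
     = Gs (b * s * c) e (br x y) w" by (rule E4)
  have a: "Gs s (b * c) (br x y) w = - Gs (b * c) s (br x y) w" by (rule Gs_anti)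
  show ?thesis
    unfolding Dd_def
    apply (rule lincomb2m[OF _ a E])
    apply (simp add: algebra_simps)
    done
qed

end


context cocyc begin

lemma sum_ext: "finite T \<Longrightarrow> S \<subseteq> T \<Longrightarrow> (\<forall>t\<in>T-S. u t = 0) \<Longrightarrow>
   (\<Sum>t\<in>S. Dd x y w t (c * u t)) = (\<Sum>t\<in>T. Dd x y w t (c * u t))"
  by (rule sum.mono_neutral_left) (auto simp: Dd_zero)

lemma sum_kd: "finite T \<Longrightarrow> p \<in> T \<Longrightarrow> (\<Sum>t\<in>T. Dd x y w t (m * kd e p t)) = Dd x y w p (m * e)"
proof -
  assume T: "finite T" "p \<in> T"
  have "(\<Sum>t\<in>T. Dd x y w t (m * kd e p t)) = (\<Sum>t\<in>T. if t = p then Dd x y w p (m * e) else 0)"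
    by (rule sum.cong) (auto simp: kd_def Dd_zero)
  also have "\<dots> = Dd x y w p (m * e)" using T by simp
  finally show ?thesis .
qed

lemma rel_Q: "u \<in> kahler_rel smA e \<Longrightarrow> finite {t. u t \<noteq> 0} \<and>
   (\<forall>c S. finite S \<longrightarrow> {t. u t \<noteq> 0} \<subseteq> S \<longrightarrow> (\<Sum>t\<in>S. Dd x y w t (c * u t)) = 0)"
proof (induction rule: kahler_rel.induct)
  case kr_zero
  then show ?case by (simp add: Dd_zero)
next
  case (kr_add u v)
  have fin: "finite {t. u t + v t \<noteq> 0}"
    by (rule finite_subset[of _ "{t. u t \<noteq> 0} \<union> {t. v t \<noteq> 0}"]) (use kr_add in auto)
  have IHu: "\<forall>c S. finite S \<longrightarrow> {t. u t \<noteq> 0} \<subseteq> S \<longrightarrow> (\<Sum>t\<in>S. Dd x y w t (c * u t)) = 0"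
    using kr_add by blast
  have IHv: "\<forall>c S. finite S \<longrightarrow> {t. v t \<noteq> 0} \<subseteq> S \<longrightarrow> (\<Sum>t\<in>S. Dd x y w t (c * v t)) = 0"
    using kr_add by blast
  show ?case
  proof (intro conjI allI impI fin)
    fix c S assume fS: "finite S" and sub: "{t. u t + v t \<noteq> 0} \<subseteq> S"
    define T where "T = S \<union> {t. u t \<noteq> 0} \<union> {t. v t \<noteq> 0}"
    have fT: "finite T" unfolding T_def using fS kr_add by auto
    have z1: "(\<Sum>t\<in>T. Dd x y w t (c * u t)) = 0" by (rule IHu[rule_format, OF fT]) (auto simp: T_def)
    have z2: "(\<Sum>t\<in>T. Dd x y w t (c * v t)) = 0" by (rule IHv[rule_format, OF fT]) (auto simp: T_def)
    have "(\<Sum>t\<in>S. Dd x y w t (c * (u t + v t))) = (\<Sum>t\<in>T. Dd x y w t (c * (u t + v t)))"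
      by (rule sum_ext[OF fT, of S "\<lambda>t. u t + v t"]) (use sub in \<open>auto simp: T_def\<close>)
    also have "\<dots> = (\<Sum>t\<in>T. Dd x y w t (c * u t)) + (\<Sum>t\<in>T. Dd x y w t (c * v t))"
      by (simp add: distrib_left Dd_add_s sum.distrib)
    also have "\<dots> = 0" using z1 z2 by simp
    finally show "(\<Sum>t\<in>S. Dd x y w t (c * (u t + v t))) = 0" .
  qed
next
  case (kr_mult u c')
  have fin: "finite {t. c' * u t \<noteq> 0}"
    by (rule finite_subset[of _ "{t. u t \<noteq> 0}"]) (use kr_mult in auto)
  show ?case
  proof (intro conjI allI impI fin)
    fix c S assume fS: "finite S" and sub: "{t. c' * u t \<noteq> 0} \<subseteq> S"
    define T where "T = S \<union> {t. u t \<noteq> 0}"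
    have fT: "finite T" unfolding T_def using fS kr_mult by auto
    have "(\<Sum>t\<in>S. Dd x y w t (c * (c' * u t))) = (\<Sum>t\<in>T. Dd x y w t (c * (c' * u t)))"
      by (rule sum_ext[OF fT, of S "\<lambda>t. c' * u t"]) (use sub in \<open>auto simp: T_def\<close>)
    also have "\<dots> = (\<Sum>t\<in>T. Dd x y w t ((c * c') * u t))" by (simp add: mult.assoc)
    also have "\<dots> = 0" using kr_mult fT unfolding T_def by auto
    finally show "(\<Sum>t\<in>S. Dd x y w t (c * (c' * u t))) = 0" .
  qed
next
  case (kr_scale u k)
  have fin: "finite {t. smA k (u t) \<noteq> 0}"
    by (rule finite_subset[of _ "{t. u t \<noteq> 0}"]) (use kr_scale in auto)
  show ?case
  proof (intro conjI allI impI fin)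
    fix c S assume fS: "finite S" and sub: "{t. smA k (u t) \<noteq> 0} \<subseteq> S"
    define T where "T = S \<union> {t. u t \<noteq> 0}"
    have fT: "finite T" unfolding T_def using fS kr_scale by auto
    have "(\<Sum>t\<in>S. Dd x y w t (c * smA k (u t))) = (\<Sum>t\<in>T. Dd x y w t (c * smA k (u t)))"
      by (rule sum_ext[OF fT, of S "\<lambda>t. smA k (u t)"]) (use sub in \<open>auto simp: T_def\<close>)
    also have "\<dots> = smZ k (\<Sum>t\<in>T. Dd x y w t (c * u t))"
      by (simp add: mult_smA Dd_scale_s Zv.scale_sum_right)
    also have "\<dots> = 0" using kr_scale fT unfolding T_def by auto
    finally show "(\<Sum>t\<in>S. Dd x y w t (c * smA k (u t))) = 0" .
  qed
next
  case (kr_leibniz b c)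
  let ?u = "\<lambda>t. kd e (b * c) t - b * kd e c t - c * kd e b t"
  have fin: "finite {t. ?u t \<noteq> 0}"
    by (rule finite_subset[of _ "{b * c, c, b}"]) (auto simp: kd_def)
  show ?case
  proof (intro conjI allI impI fin)
    fix c0 S assume fS: "finite S" and sub: "{t. ?u t \<noteq> 0} \<subseteq> S"
    define T where "T = S \<union> {b * c, c, b}"
    have fT: "finite T" unfolding T_def using fS by auto
    have "(\<Sum>t\<in>S. Dd x y w t (c0 * ?u t)) = (\<Sum>t\<in>T. Dd x y w t (c0 * ?u t))"
      by (rule sum_ext[OF fT, of S ?u]) (use sub in \<open>auto simp: T_def\<close>)
    also have "\<dots> = (\<Sum>t\<in>T. Dd x y w t (c0 * kd e (b * c) t)) - (\<Sum>t\<in>T. Dd x y w t ((c0 * b) * kd e c t))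
        - (\<Sum>t\<in>T. Dd x y w t ((c0 * c) * kd e b t))"
      by (simp add: right_diff_distrib Dd_diff_s sum_subtractf mult.assoc)
    also have "\<dots> = Dd x y w (b * c) (c0 * e) - Dd x y w c (c0 * b * e) - Dd x y w b (c0 * c * e)"
      using fT by (simp add: sum_kd T_def)
    also have "\<dots> = 0" using Dd_leib[of x y w b c c0] by (simp add: mult.commute)
    finally show "(\<Sum>t\<in>S. Dd x y w t (c0 * ?u t)) = 0" .
  qed
next
  case (kr_additive b c)
  let ?u = "\<lambda>t. kd e (b + c) t - kd e b t - kd e c t"
  have fin: "finite {t. ?u t \<noteq> 0}"
    by (rule finite_subset[of _ "{b + c, c, b}"]) (auto simp: kd_def)
  show ?case
  proof (intro conjI allI impI fin)
    fix c0 S assume fS: "finite S" and sub: "{t. ?u t \<noteq> 0} \<subseteq> S"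
    define T where "T = S \<union> {b + c, c, b}"
    have fT: "finite T" unfolding T_def using fS by auto
    have "(\<Sum>t\<in>S. Dd x y w t (c0 * ?u t)) = (\<Sum>t\<in>T. Dd x y w t (c0 * ?u t))"
      by (rule sum_ext[OF fT, of S ?u]) (use sub in \<open>auto simp: T_def\<close>)
    also have "\<dots> = (\<Sum>t\<in>T. Dd x y w t (c0 * kd e (b + c) t)) - (\<Sum>t\<in>T. Dd x y w t (c0 * kd e b t))
        - (\<Sum>t\<in>T. Dd x y w t (c0 * kd e c t))"
      by (simp add: right_diff_distrib Dd_diff_s sum_subtractf)
    also have "\<dots> = Dd x y w (b + c) (c0 * e) - Dd x y w b (c0 * e) - Dd x y w c (c0 * e)"
      using fT by (simp add: sum_kd T_def)
    also have "\<dots> = 0" by (simp add: Dd_add_b)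
    finally show "(\<Sum>t\<in>S. Dd x y w t (c0 * ?u t)) = 0" .
  qed
next
  case (kr_homog k b)
  let ?u = "\<lambda>t. kd e (smA k b) t - smA k (kd e b t)"
  have fin: "finite {t. ?u t \<noteq> 0}"
    by (rule finite_subset[of _ "{smA k b, b}"]) (auto simp: kd_def)
  show ?case
  proof (intro conjI allI impI fin)
    fix c0 S assume fS: "finite S" and sub: "{t. ?u t \<noteq> 0} \<subseteq> S"
    define T where "T = S \<union> {smA k b, b}"
    have fT: "finite T" unfolding T_def using fS by auto
    have "(\<Sum>t\<in>S. Dd x y w t (c0 * ?u t)) = (\<Sum>t\<in>T. Dd x y w t (c0 * ?u t))"
      by (rule sum_ext[OF fT, of S ?u]) (use sub in \<open>auto simp: T_def\<close>)
    also have "\<dots> = (\<Sum>t\<in>T. Dd x y w t (c0 * kd e (smA k b) t)) - smZ k (\<Sum>t\<in>T. Dd x y w t (c0 * kd e b t))"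
      by (simp add: right_diff_distrib Dd_diff_s sum_subtractf mult_smA Dd_scale_s Zv.scale_sum_right)
    also have "\<dots> = Dd x y w (smA k b) (c0 * e) - smZ k (Dd x y w b (c0 * e))"
      using fT by (simp add: sum_kd T_def)
    also have "\<dots> = 0" by (simp add: Dd_scale_b)
    finally show "(\<Sum>t\<in>S. Dd x y w t (c0 * ?u t)) = 0" .
  qed
qed

lemma stepD_dA:
  assumes dA: "\<forall>a. kd e a \<in> kahler_rel smA e"
  shows "Gs t e (br x y) w = 0"
proof -
  have R: "\<forall>c S. finite S \<longrightarrow> {s. kd e t s \<noteq> 0} \<subseteq> S \<longrightarrow> (\<Sum>s\<in>S. Dd x y w s (c * kd e t s)) = 0"
    using rel_Q[OF dA[rule_format, of t], of x y w] by blast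
  have Q: "(\<Sum>s\<in>{t}. Dd x y w s (e * kd e t s)) = 0"
    by (rule R[rule_format]) (auto simp: kd_def)
  then have "Dd x y w t e = 0" by (simp add: kd_def)
  then have "- Gs t e (br x y) w - Gs t e (br x y) w = 0"
    by (simp add: Dd_def Gs_anti[of e t])
  then have "Gs t e (br x y) w + Gs t e (br x y) w = 0"
    by (simp add: add_eq_0_iff2 minus_add_distrib[symmetric] flip: diff_conv_add_uminus)
  then show ?thesis by (rule Zv.twice_zero[OF two])
qed

lemma stepD:
  assumes "\<not> (dA_nonzero smA e \<and> Gamma_cond smL br)"
  shows "Gs t e (br x y) w = 0"
proof (cases "Gamma_cond smL br")
  case True
  then have "\<forall>a. kd e a \<in> kahler_rel smA e" using assms by (auto simp: dA_nonzero_def)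
  then show ?thesis by (rule stepD_dA)
next
  case False
  then show ?thesis by (rule stepD_Gamma)
qed

end


context cocyc begin

definition "Kp = Lv.span {v. \<exists>x y. v = br x y}"

lemma br_in_Kp: "br x y \<in> Kp" unfolding Kp_def by (rule Lv.span_base) blast

context
  fixes P assumes hyp: "\<not> (dA_nonzero smA e \<and> Gamma_cond smL br)"
    and Plin: "is_lin smL smL P" and Pid: "\<forall>v\<in>Kp. P v = v" and Pran: "\<forall>v. P v \<in> Kp"
begin

lemma Gz: "Gs t e (br x y) w = 0" by (rule stepD[OF hyp])

lemma H_Z2: "H a (br x y) w + H a (br y w) x + H a (br w x) y = 0"
  using stepA[of a x y w] Gz[of a x y w] by simp

lemma Gs_p1: "Gs (a * b) c (br x y) w + Gs (b * c) a (br y w) x + Gs (c * a) b (br w x) y = 0"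
proof -
  have i1: "Gs (b * c) a (br y w) x = Gs (b * c) a (br x y) w" using inv_gen[of "b*c" a y w x] by simp
  have i2: "Gs (c * a) b (br w x) y = Gs (c * a) b (br x y) w" using inv_gen[of "c*a" b x y w] by simp
  show ?thesis unfolding i1 i2 E4 Gz by simp
qed

lemma cyc_one: "Gs a (b * c) u (br p q) = - Gs (b * c) a (br u p) q"
proof -
  have "Gs a (b * c) u (br p q) = Gs a (b * c) (br u p) q" by (rule Gs_inv[symmetric])
  also have "\<dots> = - Gs (b * c) a (br u p) q" by (rule Gs_anti)
  finally show ?thesis .
qed

lemma cyc_br: "Gs a (b * c) u (br p q) + Gs b (c * a) u (br p q) + Gs c (a * b) u (br p q) = 0"
proof -
  have E: "Gs (a * b) c (br u p) q + Gs (b * c) a (br u p) q + Gs (c * a) b (br u p) q = 0"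
    unfolding E4 Gz by simp
  show ?thesis unfolding cyc_one
    by (rule lincomb1n[OF _ E]) (simp add: algebra_simps)
qed

lemma cyc_span: "v \<in> Kp \<Longrightarrow> Gs a (b * c) u v + Gs b (c * a) u v + Gs c (a * b) u v = 0"
  unfolding Kp_def
proof (induction rule: Lv.span_induct_alt)
  case base
  then show ?case by (simp add: is_lin_zero[OF Gs_ly])
next
  case (step k x y)
  then obtain p q where x: "x = br p q" by blast
  have "Gs a (b * c) u (smL k x + y) + Gs b (c * a) u (smL k x + y) + Gs c (a * b) u (smL k x + y)
    = smZ k (Gs a (b * c) u x + Gs b (c * a) u x + Gs c (a * b) u x)
      + (Gs a (b * c) u y + Gs b (c * a) u y + Gs c (a * b) u y)"
    by (simp add: is_lin_add[OF Gs_ly] is_lin_scale[OF Gs_ly] Zv.scale_right_distrib algebra_simps)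
  also have "\<dots> = 0" using step.IH cyc_br[of a b c u p q] x by simp
  finally show ?case .
qed

definition "G1 a b x y = Gs a b x (P y) + Gs a b (P x) y - Gs a b (P x) (P y)"
definition "G0 a b x y = Gs a b x y - G1 a b x y"

lemma P_br: "P (br x y) = br x y" using Pid br_in_Kp by blast

lemma G1_left: "v \<in> Kp \<Longrightarrow> G1 a b v y = Gs a b v y" using Pid by (simp add: G1_def)
lemma G1_right: "v \<in> Kp \<Longrightarrow> G1 a b x v = Gs a b x v" using Pid by (simp add: G1_def)
lemma G0_left: "v \<in> Kp \<Longrightarrow> G0 a b v y = 0" by (simp add: G0_def G1_left)
lemma G0_right: "v \<in> Kp \<Longrightarrow> G0 a b x v = 0" by (simp add: G0_def G1_right)

lemma G1_la: "is_lin smA smZ (\<lambda>a. G1 a b x y)" unfolding G1_def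
  by (rule Zv.is_lin_minus[OF Zv.is_lin_plus[OF Gs_la Gs_la] Gs_la])
lemma G1_lb: "is_lin smA smZ (\<lambda>b. G1 a b x y)" unfolding G1_def
  by (rule Zv.is_lin_minus[OF Zv.is_lin_plus[OF Gs_lb Gs_lb] Gs_lb])
lemma G1_lx: "is_lin smL smZ (\<lambda>x. G1 a b x y)" unfolding G1_def
  by (rule Zv.is_lin_minus[OF Zv.is_lin_plus[OF Gs_lx is_lin_comp[OF Plin Gs_lx]] is_lin_comp[OF Plin Gs_lx]])
lemma G1_ly: "is_lin smL smZ (\<lambda>y. G1 a b x y)" unfolding G1_def
  by (rule Zv.is_lin_minus[OF Zv.is_lin_plus[OF is_lin_comp[OF Plin Gs_ly] Gs_ly] is_lin_comp[OF Plin Gs_ly]])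
lemma G1_anti: "G1 a b x y = - G1 b a x y"
  by (simp add: G1_def Gs_anti[of b a])
lemma G1_sym: "G1 a b x y = G1 a b y x"
  by (simp add: G1_def Gs_sym[of a b y "P x"] Gs_sym[of a b "P y" x] Gs_sym[of a b "P y" "P x"])

lemma G1_LS: "LS_form smA smL smZ G1"
  unfolding LS_form_def using G1_la G1_lb G1_lx G1_ly G1_anti G1_sym by blast

lemma G0_LS: "LS_form smA smL smZ G0"
proof -
  have 1: "is_lin smA smZ (\<lambda>a. G0 a b x y)" for b x y unfolding G0_def by (rule Zv.is_lin_minus[OF Gs_la G1_la])
  have 2: "is_lin smA smZ (\<lambda>b. G0 a b x y)" for a x y unfolding G0_def by (rule Zv.is_lin_minus[OF Gs_lb G1_lb])
  have 3: "is_lin smL smZ (\<lambda>x. G0 a b x y)" for a b y unfolding G0_def by (rule Zv.is_lin_minus[OF Gs_lx G1_lx])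
  have 4: "is_lin smL smZ (\<lambda>y. G0 a b x y)" for a b x unfolding G0_def by (rule Zv.is_lin_minus[OF Gs_ly G1_ly])
  have 5: "G0 a b x y = - G0 b a x y" for a b x y
    unfolding G0_def using G1_anti[of a b x y] Gs_anti[of a b x y] by simp
  have 6: "G0 a b x y = G0 a b y x" for a b x y
    unfolding G0_def using G1_sym[of a b x y] Gs_sym[of a b x y] by simp
  show ?thesis unfolding LS_form_def using 1 2 3 4 5 6 by blast
qed

lemma good: "good_decomposition smA smL smZ br e F"
proof -
  have f1: "\<forall>a b x y. comp1 smZ F a b x y = G0 a b x y + G1 a b x y" by (simp add: G0_def)
  have f2: "g_cocycle br (p1_form G0)"
    unfolding g_cocycle_def p1_form_def by (simp add: G0_left br_in_Kp)
  have f3: "g_cocycle br (p1_form G1)"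
    unfolding g_cocycle_def p1_form_def by (simp add: G1_left br_in_Kp Gs_p1)
  have f4: "g_cocycle br (p2_form (comp2 smZ e F))"
    unfolding g_cocycle_def p2_form_def
  proof (intro allI)
    fix a b c :: 'a and x y w
    have p1: "b * c * a = a * b * c" by (simp add: mult_ac)
    have p2: "c * a * b = a * b * c" by (simp add: mult_ac)
    show "H (a * b * c) (br x y) w + H (b * c * a) (br y w) x + H (c * a * b) (br w x) y = 0"
      unfolding p1 p2 by (rule H_Z2)
  qed
  have f5: "g_cocycle br (p3_form (comp3 smZ e F))"
    unfolding g_cocycle_def p3_form_def by (simp add: K_br)
  have f6: "vanishes_g_g' br (p1_form G0)"
    unfolding vanishes_g_g'_def p1_form_def by (simp add: G0_right br_in_Kp)
  have f7: "\<forall>a b x y w. G1 a b (br x y) w = G1 a b x (br y w)"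
    by (simp add: G1_left G1_right br_in_Kp Gs_inv)
  have f8: "\<forall>a b c x y. G1 a (b * c) x y + G1 b (c * a) x y + G1 c (a * b) x y = 0"
  proof (intro allI)
    fix a b c x y
    have "G1 a (b * c) x y + G1 b (c * a) x y + G1 c (a * b) x y
      = (Gs a (b * c) x (P y) + Gs b (c * a) x (P y) + Gs c (a * b) x (P y))
      + (Gs a (b * c) y (P x) + Gs b (c * a) y (P x) + Gs c (a * b) y (P x))
      - (Gs a (b * c) (P x) (P y) + Gs b (c * a) (P x) (P y) + Gs c (a * b) (P x) (P y))"
      by (simp add: G1_def Gs_sym[of _ _ "P x" y] algebra_simps)
    also have "\<dots> = 0" using cyc_span Pran by simp
    finally show "G1 a (b * c) x y + G1 b (c * a) x y + G1 c (a * b) x y = 0" .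
  qed
  have f9: "\<forall>a x y w. H a (br x y) w + H a (br y w) x + H a (br w x) y = 0" by (simp add: H_Z2)
  have f10: "vanishes_g_g' br (p3_form (comp3 smZ e F))"
    unfolding vanishes_g_g'_def p3_form_def by (simp add: K_br2)
  show ?thesis unfolding good_decomposition_def
    apply (rule exI[of _ G0], rule exI[of _ G1])
    using G0_LS G1_LS f1 f2 f3 f4 f5 f6 f7 f8 f9 f10 by blast
qed

end

lemma good_decomp:
  assumes hyp: "\<not> (dA_nonzero smA e \<and> Gamma_cond smL br)"
  shows "good_decomposition smA smL smZ br e F"
proof -
  obtain P where P: "is_lin smL smL P" "\<forall>v\<in>Kp. P v = v" "\<forall>v. P v \<in> Kp"
    using Lv.projection_exists[of "{v. \<exists>x y. v = br x y}"] unfolding Kp_def by blast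
  show ?thesis by (rule good[OF hyp P])
qed

lemma p1_cocycle:
  assumes hyp: "\<not> (dA_nonzero smA e \<and> Gamma_cond smL br)"
  shows "g_cocycle br (p1_form (comp1 smZ F))"
  unfolding g_cocycle_def p1_form_def
proof (intro allI)
  fix a b c x y w
  have i1: "Gs (b * c) a (br y w) x = Gs (b * c) a (br x y) w" using inv_gen[of "b*c" a y w x] by simp
  have i2: "Gs (c * a) b (br w x) y = Gs (c * a) b (br x y) w" using inv_gen[of "c*a" b x y w] by simp
  show "Gs (a * b) c (br x y) w + Gs (b * c) a (br y w) x + Gs (c * a) b (br w x) y = 0"
    unfolding i1 i2 E4 stepD[OF hyp] by simp
qed

end


context setting begin

definition "sV = (\<lambda>k (u::'a \<Rightarrow> 'a) t. smA k (u t))"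

lemma sV_vs: "Vector_Spaces.vector_space sV"
  unfolding sV_def
  by unfold_locales (simp_all add: fun_eq_iff Av.scale_right_distrib Av.scale_left_distrib)

lemma rel_subspace: "module.subspace sV (kahler_rel smA e)"
proof -
  interpret V: vector_space sV by (rule sV_vs)
  show ?thesis
    unfolding V.subspace_def
  proof (intro conjI ballI allI)
    show "0 \<in> kahler_rel smA e" using kahler_rel.kr_zero by (simp add: zero_fun_def)
    show "x + y \<in> kahler_rel smA e" if "x \<in> kahler_rel smA e" "y \<in> kahler_rel smA e" for x y
      using kahler_rel.kr_add[OF that] by (simp add: plus_fun_def)
    show "sV c x \<in> kahler_rel smA e" if "x \<in> kahler_rel smA e" for c x
      using kahler_rel.kr_scale[OF that] by (simp add: sV_def)
  qed
qed


context
  fixes lam :: "('a \<Rightarrow> 'a) \<Rightarrow> 'k"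
  assumes lamlin: "is_lin sV (*) lam" and lamrel: "\<forall>u\<in>kahler_rel smA e. lam u = 0"
begin

definition "Lf a b = lam (\<lambda>t. a * kd e b t)"

lemma lam_diff: "lam (\<lambda>t. f t - g t) = lam f - lam g"
  using is_lin_diff[OF lamlin, of f g] by (simp add: fun_diff_def)
lemma lam_add: "lam (\<lambda>t. f t + g t) = lam f + lam g"
  using is_lin_add[OF lamlin, of f g] by (simp add: plus_fun_def)
lemma lam_sc: "lam (\<lambda>t. smA k (f t)) = k * lam f"
  using is_lin_scale[OF lamlin, of k f] by (simp add: sV_def)

lemma L_add_a: "Lf (a + a') b = Lf a b + Lf a' b"
  unfolding Lf_def by (simp add: distrib_right lam_add)
lemma L_scale_a: "Lf (smA k a) b = k * Lf a b"
  unfolding Lf_def by (simp add: smA_mult[symmetric] lam_sc)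
lemma L_add_b: "Lf a (b + c) = Lf a b + Lf a c"
proof -
  have "(\<lambda>t. a * (kd e (b + c) t - kd e b t - kd e c t)) \<in> kahler_rel smA e"
    by (rule kahler_rel.kr_mult[OF kahler_rel.kr_additive])
  then have "lam (\<lambda>t. a * (kd e (b + c) t - kd e b t - kd e c t)) = 0" using lamrel by blast
  then have "lam (\<lambda>t. a * kd e (b + c) t - a * kd e b t - a * kd e c t) = 0" by (simp add: right_diff_distrib)
  then show ?thesis unfolding Lf_def by (simp add: lam_diff diff_eq_eq add_ac)
qed
lemma L_scale_b: "Lf a (smA k b) = k * Lf a b"
proof -
  have "(\<lambda>t. a * (kd e (smA k b) t - smA k (kd e b t))) \<in> kahler_rel smA e"
    by (rule kahler_rel.kr_mult[OF kahler_rel.kr_homog])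
  then have "lam (\<lambda>t. a * (kd e (smA k b) t - smA k (kd e b t))) = 0" using lamrel by blast
  then have "lam (\<lambda>t. a * kd e (smA k b) t - smA k (a * kd e b t)) = 0" by (simp add: right_diff_distrib mult_smA)
  then show ?thesis unfolding Lf_def by (simp add: lam_diff lam_sc)
qed
lemma L_leib: "Lf a (b * c) = Lf (a * b) c + Lf (a * c) b"
proof -
  have "(\<lambda>t. a * (kd e (b * c) t - b * kd e c t - c * kd e b t)) \<in> kahler_rel smA e"
    by (rule kahler_rel.kr_mult[OF kahler_rel.kr_leibniz])
  then have "lam (\<lambda>t. a * (kd e (b * c) t - b * kd e c t - c * kd e b t)) = 0" using lamrel by blast
  then have "lam (\<lambda>t. a * kd e (b * c) t - (a * b) * kd e c t - (a * c) * kd e b t) = 0"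
    by (simp add: right_diff_distrib mult.assoc)
  then show ?thesis unfolding Lf_def by (simp add: lam_diff diff_eq_eq add_ac)
qed

lemma L_la: "is_lin smA (*) (\<lambda>a. Lf a b)"
  unfolding is_lin_def by (simp add: L_add_a L_scale_a)
lemma L_lb: "is_lin smA (*) (\<lambda>b. Lf a b)"
  unfolding is_lin_def by (simp add: L_add_b L_scale_b)

definition "phi a b = inverse 2 * (Lf a b - Lf b a)"
definition "psi t = - (inverse 2 * Lf e t)"

lemma phi_cyc: "phi (a * b) c + phi (b * c) a + phi (c * a) b = psi (a * b * c)"
proof -
  have l1: "Lf c (a * b) = Lf (c * a) b + Lf (c * b) a" by (rule L_leib)
  have l2: "Lf a (b * c) = Lf (a * b) c + Lf (a * c) b" by (rule L_leib)
  have l3: "Lf b (c * a) = Lf (b * c) a + Lf (b * a) c" by (rule L_leib)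
  have l4: "Lf e (a * b * c) = Lf a (b * c) + Lf (b * c) a"
    using L_leib[of e a "b * c"] by (simp add: mult.assoc)
  have c1: "c * b = b * c" "a * c = c * a" "b * a = a * b" by (simp_all add: mult.commute)
  show ?thesis unfolding phi_def psi_def l1 l2 l3 l4 c1
    by (simp add: algebra_simps)
qed

context
  fixes \<kappa> \<omega> :: "'l \<Rightarrow> 'l \<Rightarrow> 'k"
  assumes k1: "\<forall>y. is_lin smL (*) (\<lambda>x. \<kappa> x y)" and k2: "\<forall>x. is_lin smL (*) (\<lambda>y. \<kappa> x y)"
    and ksym: "\<forall>x y. \<kappa> x y = \<kappa> y x"
    and kinv: "\<forall>x y z. \<kappa> (br x y) z = \<kappa> x (br y z)"
    and o1: "\<forall>y. is_lin smL (*) (\<lambda>x. \<omega> x y)" and o2: "\<forall>x. is_lin smL (*) (\<lambda>y. \<omega> x y)"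
    and oalt: "\<forall>x. \<omega> x x = 0"
    and orel: "\<forall>x y z. \<kappa> (br x y) z = - \<omega> (br x y) z + \<omega> (br x z) y - \<omega> (br y z) x"
begin

definition "Fc a x b y = phi a b * \<kappa> x y + psi (a * b) * \<omega> x y"

lemma om_anti: "\<omega> y x = - \<omega> x y"
proof -
  have "0 = \<omega> (x + y) (x + y)" using oalt by simp
  also have "\<dots> = \<omega> x x + \<omega> x y + (\<omega> y x + \<omega> y y)"
    using is_lin_add[OF o1[rule_format]] is_lin_add[OF o2[rule_format]] by (simp add: add.assoc)
  finally show ?thesis using oalt by (simp add: eq_neg_iff_add_eq_0 add.commute)
qed

lemma phi_anti: "phi b a = - phi a b" by (simp add: phi_def algebra_simps)

lemma g1: "\<kappa> (br y w) x = \<kappa> (br x y) w"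
  using ksym[rule_format, of "br y w" x] kinv[rule_format, of x y w] by simp
lemma g2: "\<kappa> (br w x) y = \<kappa> (br x y) w"
  using ksym[rule_format, of "br w x" y] kinv[rule_format, of y w x] g1[of y w x] by simp

lemma osum: "\<omega> (br x y) w + \<omega> (br y w) x + \<omega> (br w x) y = - \<kappa> (br x y) w"
proof -
  have "\<omega> (br w x) y = - \<omega> (br x w) y"
    using is_lin_neg[OF o1[rule_format], of "br x w" y] br_swap[of w x] by simp
  then show ?thesis using orel[rule_format, of x y w] by (simp add: algebra_simps)
qed

lemma Fc_form: "g_form smA smL (*) Fc"
  unfolding g_form_def
proof (intro conjI allI)
  show "is_lin smA (*) (\<lambda>a. Fc a x b y)" for x b y
    unfolding is_lin_def Fc_def phi_def psi_def
    by (simp add: L_add_a L_add_b L_scale_a L_scale_b distrib_right smA_mult[symmetric] mult_smA algebra_simps)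
  show "is_lin smA (*) (\<lambda>b. Fc a x b y)" for a x y
    unfolding is_lin_def Fc_def phi_def psi_def
    by (simp add: L_add_a L_add_b L_scale_a L_scale_b distrib_left mult_smA algebra_simps)
  show "is_lin smL (*) (\<lambda>x. Fc a x b y)" for a b y
    unfolding is_lin_def Fc_def
    by (simp add: is_lin_add[OF k1[rule_format]] is_lin_add[OF o1[rule_format]]
        is_lin_scale[OF k1[rule_format]] is_lin_scale[OF o1[rule_format]] algebra_simps)
  show "is_lin smL (*) (\<lambda>y. Fc a x b y)" for a x b
    unfolding is_lin_def Fc_def
    by (simp add: is_lin_add[OF k2[rule_format]] is_lin_add[OF o2[rule_format]]
        is_lin_scale[OF k2[rule_format]] is_lin_scale[OF o2[rule_format]] algebra_simps)
  show "Fc a x b y = - Fc b y a x" for a x b y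
    unfolding Fc_def using phi_anti[of a b] ksym om_anti[of x y] by (simp add: mult.commute)
qed

lemma Fc_cocycle: "g_cocycle br Fc"
  unfolding g_cocycle_def
proof (intro allI)
  fix a b c :: 'a and x y w :: 'l
  have p1: "b * c * a = a * b * c" by (simp add: mult_ac)
  have p2: "c * a * b = a * b * c" by (simp add: mult_ac)
  have "Fc (a * b) (br x y) c w + Fc (b * c) (br y w) a x + Fc (c * a) (br w x) b y
    = \<kappa> (br x y) w * (phi (a * b) c + phi (b * c) a + phi (c * a) b)
      + psi (a * b * c) * (\<omega> (br x y) w + \<omega> (br y w) x + \<omega> (br w x) y)"
    unfolding Fc_def p1 p2 g1[of y w x] g2[of w x y] by (simp add: algebra_simps)
  also have "\<dots> = 0" unfolding phi_cyc osum by simp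
  finally show "Fc (a * b) (br x y) c w + Fc (b * c) (br y w) a x + Fc (c * a) (br w x) b y = 0" .
qed

lemma Fc_comp3: "comp3 (*) e Fc a b x y = 0"
  unfolding comp3_def comp2_def Fc_def
  using ksym om_anti[of x y] by (simp add: algebra_simps)

lemma Fc_comp1: "comp1 (*) Fc a b x y = phi a b * \<kappa> x y"
proof -
  have "comp1 (*) Fc a b x y = inverse 2 * (2 * (phi a b * \<kappa> x y))"
    unfolding comp1_def Fc_def using ksym om_anti[of x y] by (simp add: algebra_simps)
  also have "\<dots> = phi a b * \<kappa> x y" using two by simp
  finally show ?thesis .
qed

end

end

end



context setting begin

lemma part2:
  assumes dA: "dA_nonzero smA e" and G: "Gamma_cond smL br"
  shows "\<exists>F :: 'a \<Rightarrow> 'l \<Rightarrow> 'a \<Rightarrow> 'l \<Rightarrow> 'k. coupled_cocycle smA smL (*) br e F"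
proof -
  obtain a0 where a0: "kd e a0 \<notin> kahler_rel smA e" using dA by (auto simp: dA_nonzero_def)
  obtain \<kappa> :: "'l \<Rightarrow> 'l \<Rightarrow> 'k" where
    k1: "\<forall>y. is_lin smL (*) (\<lambda>x. \<kappa> x y)" and k2: "\<forall>x. is_lin smL (*) (\<lambda>y. \<kappa> x y)"
    and ksym: "\<forall>x y. \<kappa> x y = \<kappa> y x"
    and kinv: "\<forall>x y z. \<kappa> (br x y) z = \<kappa> x (br y z)"
    and knz: "\<exists>x y z. \<kappa> (br x y) z \<noteq> 0"
    and om: "\<exists>\<omega> :: 'l \<Rightarrow> 'l \<Rightarrow> 'k.
          (\<forall>y. is_lin smL (*) (\<lambda>x. \<omega> x y)) \<and> (\<forall>x. is_lin smL (*) (\<lambda>y. \<omega> x y))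
        \<and> (\<forall>x. \<omega> x x = 0)
        \<and> (\<forall>x y z. \<kappa> (br x y) z = - \<omega> (br x y) z + \<omega> (br x z) y - \<omega> (br y z) x)"
    using G unfolding Gamma_cond_def by blast
  obtain \<omega> :: "'l \<Rightarrow> 'l \<Rightarrow> 'k" where
    o1: "\<forall>y. is_lin smL (*) (\<lambda>x. \<omega> x y)" and o2: "\<forall>x. is_lin smL (*) (\<lambda>y. \<omega> x y)"
    and oalt: "\<forall>x. \<omega> x x = 0"
    and orel: "\<forall>x y z. \<kappa> (br x y) z = - \<omega> (br x y) z + \<omega> (br x z) y - \<omega> (br y z) x"
    using om by blast
  interpret V: vector_space sV by (rule sV_vs)
  obtain lam where lam: "is_lin sV (*) lam" "\<forall>u\<in>kahler_rel smA e. lam u = 0" "lam (kd e a0) = 1"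
    using V.functional_sep[OF rel_subspace a0] by blast
  note ctx = lam(1) lam(2) k1 k2 ksym kinv o1 o2 oalt orel
  obtain x0 y0 w0 where nz: "\<kappa> (br x0 y0) w0 \<noteq> 0" using knz by blast
  have Le: "Lf lam e a0 = 1"
  proof -
    have "(\<lambda>t. e * kd e a0 t) = kd e a0" by (simp add: fun_eq_iff)
    then show ?thesis using lam(3) by (simp add: Lf_def[OF lam(1) lam(2)])
  qed
  let ?F = "Fc lam \<kappa> \<omega>"
  have "coupled_cocycle smA smL (*) br e ?F"
    unfolding coupled_cocycle_def g_2cocycle_def
  proof (intro conjI allI)
    show "g_form smA smL (*) ?F" by (rule Fc_form[OF ctx])
    show "g_cocycle br ?F" by (rule Fc_cocycle[OF ctx])
    show "comp3 (*) e ?F a b x y = 0" for a b x y by (rule Fc_comp3[OF ctx])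
    show "\<not> g_cocycle br (p1_form (comp1 (*) ?F))"
    proof
      assume "g_cocycle br (p1_form (comp1 (*) ?F))"
      then have h: "comp1 (*) ?F (e * e) a0 (br x0 y0) w0 + comp1 (*) ?F (e * a0) e (br y0 w0) x0
         + comp1 (*) ?F (a0 * e) e (br w0 x0) y0 = 0"
        unfolding g_cocycle_def p1_form_def by blast
      have "comp1 (*) ?F (e * e) a0 (br x0 y0) w0 + comp1 (*) ?F (e * a0) e (br y0 w0) x0
         + comp1 (*) ?F (a0 * e) e (br w0 x0) y0
        = \<kappa> (br x0 y0) w0 * (phi lam (e * e) a0 + phi lam (e * a0) e + phi lam (a0 * e) e)"
        unfolding Fc_comp1[OF ctx] g1[OF ctx, of y0 w0 x0] g2[OF ctx, of w0 x0 y0]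
        by (simp add: algebra_simps)
      also have "\<dots> = \<kappa> (br x0 y0) w0 * psi lam a0"
        unfolding phi_cyc[OF lam(1) lam(2), of e e a0] by simp
      also have "\<dots> = - (\<kappa> (br x0 y0) w0 * inverse 2)"
        by (simp add: psi_def[OF lam(1) lam(2)] Le)
      finally have "\<kappa> (br x0 y0) w0 * inverse 2 = 0" using h by simp
      then show False using nz two by simp
    qed
  qed
  then show ?thesis by blast
qed

end

theorem theorem3p7:
  fixes smA :: "'k::field \<Rightarrow> 'a::comm_ring \<Rightarrow> 'a" and e :: 'a
    and smL :: "'k \<Rightarrow> 'l::ab_group_add \<Rightarrow> 'l" and br :: "'l \<Rightarrow> 'l \<Rightarrow> 'l"
    and smZ :: "'k \<Rightarrow> 'z::ab_group_add \<Rightarrow> 'z"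
  assumes two: "(2::'k) \<noteq> 0"
    and A: "comm_K_algebra smA e"
    and L: "lie_algebra smL br"
    and Z: "Vector_Spaces.vector_space smZ"
  shows "((\<exists>F :: 'a \<Rightarrow> 'l \<Rightarrow> 'a \<Rightarrow> 'l \<Rightarrow> 'z. coupled_cocycle smA smL smZ br e F)
            \<longrightarrow> dA_nonzero smA e \<and> Gamma_cond smL br)
       \<and> (dA_nonzero smA e \<and> Gamma_cond smL br
            \<longrightarrow> (\<exists>F :: 'a \<Rightarrow> 'l \<Rightarrow> 'a \<Rightarrow> 'l \<Rightarrow> 'k. coupled_cocycle smA smL (*) br e F))
       \<and> (\<not> (dA_nonzero smA e \<and> Gamma_cond smL br)
            \<longrightarrow> (\<forall>F :: 'a \<Rightarrow> 'l \<Rightarrow> 'a \<Rightarrow> 'l \<Rightarrow> 'z. g_2cocycle smA smL smZ br F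
                   \<longrightarrow> good_decomposition smA smL smZ br e F))"
proof -
  have S: "setting smA e smL br smZ" using two A L Z by (simp add: setting_def)
  interpret S: setting smA e smL br smZ by (rule S)
  have C: "cocyc smA e smL br smZ F" if "g_2cocycle smA smL smZ br F" for F
    using S that by (simp add: cocyc_def cocyc_axioms_def g_2cocycle_def)
  have P1: "dA_nonzero smA e \<and> Gamma_cond smL br"
    if ex: "\<exists>F :: 'a \<Rightarrow> 'l \<Rightarrow> 'a \<Rightarrow> 'l \<Rightarrow> 'z. coupled_cocycle smA smL smZ br e F"
  proof (rule ccontr)
    assume hyp: "\<not> (dA_nonzero smA e \<and> Gamma_cond smL br)"
    obtain F :: "'a \<Rightarrow> 'l \<Rightarrow> 'a \<Rightarrow> 'l \<Rightarrow> 'z" where F: "coupled_cocycle smA smL smZ br e F" using ex by blast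
    then have "cocyc smA e smL br smZ F" using C by (simp add: coupled_cocycle_def)
    then have "g_cocycle br (p1_form (comp1 smZ F))" using hyp by (rule cocyc.p1_cocycle)
    then show False using F by (simp add: coupled_cocycle_def)
  qed
  have P3: "\<forall>F :: 'a \<Rightarrow> 'l \<Rightarrow> 'a \<Rightarrow> 'l \<Rightarrow> 'z. g_2cocycle smA smL smZ br F
                   \<longrightarrow> good_decomposition smA smL smZ br e F"
    if hyp: "\<not> (dA_nonzero smA e \<and> Gamma_cond smL br)"
  proof (intro allI impI)
    fix F :: "'a \<Rightarrow> 'l \<Rightarrow> 'a \<Rightarrow> 'l \<Rightarrow> 'z"
    assume "g_2cocycle smA smL smZ br F"
    then have "cocyc smA e smL br smZ F" by (rule C)
    then show "good_decomposition smA smL smZ br e F" using hyp by (rule cocyc.good_decomp)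
  qed
  show ?thesis using P1 P3 S.part2 by blast
qed

end
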